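(* Let $n\ge 3$. The cycle $C_n$ is pseudo-Gorenstein$^{*}$ if and only if $n\equiv 1,2,5,10 \pmod{12}$.
   Context: For a finite simple graph $G$ on vertex set $[N]$, let $S=K[x_1,\dots,x_N]$ ($K$ a field) and $I(G)$ the edge ideal generated by $x_ix_j$, $\{i,j\}\in E(G)$. Let $\alpha(G)$ be the independence number (equal to $\dim S/I(G)$). Write the Hilbert series of $S/I(G)$ uniquely as $(h_0+\dots+h_st^s)/(1-t)^{\alpha(G)}$ with $h_s\ne 0$; the numerator is the $h$-polynomial $h_G(t)$, and $\mathfrak a(G)=s-\alpha(G)$. $G$ is pseudo-Gorenstein$^{*}$ if $h_s=1$ and $\mathfrak a(G)=0$. $C_n$ denotes the cycle on $n$ vertices. *)

theory Defs
  imports "HOL-Computational_Algebra.Computational_Algebra"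
begin

text \<open>Graphs on vertex set {0..<N} given by an edge relation E (assumed symmetric
  and irreflexive where relevant).  Monomials of S = K[x_0..x_{N-1}] are exponent
  vectors a :: nat => nat supported on {0..<N}.\<close>

definition independent :: "nat \<Rightarrow> (nat \<Rightarrow> nat \<Rightarrow> bool) \<Rightarrow> nat set \<Rightarrow> bool" where
  "independent N E A \<longleftrightarrow> A \<subseteq> {0..<N} \<and> (\<forall>i\<in>A. \<forall>j\<in>A. \<not> E i j)"

definition indep_num :: "nat \<Rightarrow> (nat \<Rightarrow> nat \<Rightarrow> bool) \<Rightarrow> nat" where
  "indep_num N E = Max (card ` {A. independent N E A})"

text \<open>Standard monomials of degree k for the edge ideal I(G): monomials not divisible
  by any x_i x_j with {i,j} an edge.  They form a K-basis of (S/I(G))_k, so the count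
  is the Hilbert function of S/I(G) (for any field K).\<close>

definition std_monomials :: "nat \<Rightarrow> (nat \<Rightarrow> nat \<Rightarrow> bool) \<Rightarrow> nat \<Rightarrow> (nat \<Rightarrow> nat) set" where
  "std_monomials N E k = {a. (\<forall>i. N \<le> i \<longrightarrow> a i = 0) \<and> (\<Sum>i<N. a i) = k \<and>
      (\<forall>i<N. \<forall>j<N. E i j \<longrightarrow> a i = 0 \<or> a j = 0)}"

definition hilbert_fun :: "nat \<Rightarrow> (nat \<Rightarrow> nat \<Rightarrow> bool) \<Rightarrow> nat \<Rightarrow> nat" where
  "hilbert_fun N E k = card (std_monomials N E k)"

definition hilbert_series :: "nat \<Rightarrow> (nat \<Rightarrow> nat \<Rightarrow> bool) \<Rightarrow> int fps" where
  "hilbert_series N E = Abs_fps (\<lambda>k. int (hilbert_fun N E k))"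

definition is_h_poly :: "nat \<Rightarrow> (nat \<Rightarrow> nat \<Rightarrow> bool) \<Rightarrow> int poly \<Rightarrow> bool" where
  "is_h_poly N E h \<longleftrightarrow>
     fps_of_poly h = hilbert_series N E * (1 - fps_X) ^ indep_num N E"

definition pseudo_gorenstein_star :: "nat \<Rightarrow> (nat \<Rightarrow> nat \<Rightarrow> bool) \<Rightarrow> bool" where
  "pseudo_gorenstein_star N E \<longleftrightarrow>
     (\<exists>h. is_h_poly N E h \<and> lead_coeff h = 1 \<and> int (degree h) - int (indep_num N E) = 0)"

definition cycle_edge :: "nat \<Rightarrow> nat \<Rightarrow> nat \<Rightarrow> bool" where
  "cycle_edge n i j \<longleftrightarrow> i < n \<and> j < n \<and> (j = Suc i mod n \<or> i = Suc j mod n)"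

end

theory Submission
  imports Defs
begin

definition scomp :: "nat set \<Rightarrow> nat \<Rightarrow> (nat \<Rightarrow> nat) set" where
  "scomp F k = {a. {i. a i \<noteq> 0} = F \<and> sum a F = k}"

lemma scomp_finite:
  assumes "finite F" shows "finite (scomp F k)"
proof -
  have "scomp F k \<subseteq> (\<lambda>f i. if i \<in> F then f i else 0) ` (PiE F (\<lambda>_. {0..k}))"
  proof
    fix a assume a: "a \<in> scomp F k"
    then have sup: "{i. a i \<noteq> 0} = F" and s: "sum a F = k" by (auto simp: scomp_def)
    have "\<forall>i\<in>F. a i \<le> k" using s assms by (metis member_le_sum zero_le)
    then have "restrict a F \<in> PiE F (\<lambda>_. {0..k})" by auto
    moreover have "a = (\<lambda>i. if i \<in> F then restrict a F i else 0)"
      using sup by (auto simp: fun_eq_iff)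
    ultimately show "a \<in> (\<lambda>f i. if i \<in> F then f i else 0) ` (PiE F (\<lambda>_. {0..k}))" by blast
  qed
  moreover have "finite (PiE F (\<lambda>_. {0..k::nat}))" using assms by (simp add: finite_PiE)
  ultimately show ?thesis by (meson finite_imageI finite_subset)
qed

lemma scomp_empty: "scomp {} k = (if k = 0 then {\<lambda>_. 0} else {})"
  by (auto simp: scomp_def fun_eq_iff)

lemma scomp_insert_0:
  assumes "finite F" "x \<notin> F" shows "scomp (insert x F) 0 = {}"
  using assms by (auto simp: scomp_def)

lemma scomp_insert_Suc:
  assumes fin: "finite F" and x: "x \<notin> F"
  shows "card (scomp (insert x F) (Suc k)) = card (scomp (insert x F) k) + card (scomp F k)"
proof -
  define S1 where "S1 = {a \<in> scomp (insert x F) (Suc k). a x = 1}"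
  define S2 where "S2 = {a \<in> scomp (insert x F) (Suc k). a x \<noteq> 1}"
  have split: "scomp (insert x F) (Suc k) = S1 \<union> S2" "S1 \<inter> S2 = {}"
    by (auto simp: S1_def S2_def)
  have sumF: "sum (b(x := v)) F = sum b F" for b :: "nat \<Rightarrow> nat" and v
    using x by (intro sum.cong) auto
  have sumF2: "(\<Sum>i\<in>F. if i = x then v else b i) = sum b F" for b :: "nat \<Rightarrow> nat" and v
    using x by (intro sum.cong) auto
  have S1: "S1 = (\<lambda>b. b(x := 1)) ` scomp F k"
  proof (intro equalityI subsetI)
    fix a assume a: "a \<in> S1"
    then have sup: "{i. a i \<noteq> 0} = insert x F" and s: "sum a (insert x F) = Suc k" and ax: "a x = 1"
      by (auto simp: S1_def scomp_def)
    have "a(x := 0) \<in> scomp F k"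
      unfolding scomp_def using sup s ax x fin by (auto simp: sumF sumF2)
    moreover have "a = (a(x:=0))(x := 1)" using ax by auto
    ultimately show "a \<in> (\<lambda>b. b(x := 1)) ` scomp F k" by blast
  next
    fix a assume "a \<in> (\<lambda>b. b(x := 1)) ` scomp F k"
    then obtain b where b: "b \<in> scomp F k" and a: "a = b(x := 1)" by blast
    have sup: "{i. b i \<noteq> 0} = F" and s: "sum b F = k" using b by (auto simp: scomp_def)
    have bx: "b x = 0" using sup x by auto
    have "{i. (b(x:=1)) i \<noteq> 0} = insert x F" using sup by auto
    moreover have "sum (b(x:=1)) (insert x F) = Suc k" using fin x s sumF[of b 1] by simp
    ultimately show "a \<in> S1" unfolding S1_def scomp_def a by simp
  qed
  have S2: "S2 = (\<lambda>b. b(x := Suc (b x))) ` scomp (insert x F) k"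
  proof (intro equalityI subsetI)
    fix a assume a: "a \<in> S2"
    then have sup: "{i. a i \<noteq> 0} = insert x F" and s: "sum a (insert x F) = Suc k" and ax: "a x \<noteq> 1"
      by (auto simp: S2_def scomp_def)
    have ax0: "a x \<noteq> 0" using sup by auto
    have "{i. (a(x := a x - 1)) i \<noteq> 0} = insert x F" using sup ax ax0 by auto
    moreover have "sum (a(x := a x - 1)) (insert x F) = k" using fin x s sumF[of a "a x - 1"] ax0 by simp
    ultimately have "a(x := a x - 1) \<in> scomp (insert x F) k"
      unfolding scomp_def by blast
    moreover have "a = (\<lambda>b. b(x := Suc (b x))) (a(x := a x - 1))" using ax0 by auto
    ultimately show "a \<in> (\<lambda>b. b(x := Suc (b x))) ` scomp (insert x F) k" by blast
  next
    fix a assume "a \<in> (\<lambda>b. b(x := Suc (b x))) ` scomp (insert x F) k"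
    then obtain b where b: "b \<in> scomp (insert x F) k" and a: "a = b(x := Suc (b x))" by blast
    have sup: "{i. b i \<noteq> 0} = insert x F" and s: "sum b (insert x F) = k" using b by (auto simp: scomp_def)
    have bx: "b x \<noteq> 0" using sup by auto
    have "{i. (b(x := Suc (b x))) i \<noteq> 0} = insert x F" using sup by auto
    moreover have "sum (b(x := Suc (b x))) (insert x F) = Suc k" using fin x s sumF[of b "Suc (b x)"] by simp
    ultimately show "a \<in> S2" unfolding S2_def scomp_def a using bx by simp
  qed
  have i1: "inj_on (\<lambda>b. b(x := 1)) (scomp F k)"
  proof (rule inj_onI)
    fix b c assume b: "b \<in> scomp F k" and c: "c \<in> scomp F k" and e: "b(x := 1) = c(x := 1)"
    have bx: "b x = 0" using b x by (auto simp: scomp_def)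
    have cx: "c x = 0" using c x by (auto simp: scomp_def)
    show "b = c"
    proof
      fix y show "b y = c y"
      proof (cases "y = x")
        case True then show ?thesis using bx cx by simp
      next
        case False then show ?thesis using fun_cong[OF e, of y] by simp
      qed
    qed
  qed
  have i2: "inj_on (\<lambda>b. b(x := Suc (b x))) (scomp (insert x F) k)"
  proof (rule inj_onI)
    fix b c assume e: "b(x := Suc (b x)) = c(x := Suc (c x))"
    show "b = c"
    proof
      fix y show "b y = c y"
      proof (cases "y = x")
        case True then show ?thesis using fun_cong[OF e, of x] by simp
      next
        case False then show ?thesis using fun_cong[OF e, of y] by simp
      qed
    qed
  qed
  have fin1: "finite (scomp (insert x F) (Suc k))" using fin scomp_finite by blast
  have "card (scomp (insert x F) (Suc k)) = card S1 + card S2"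
    using split fin1 by (simp add: card_Un_disjoint)
  also have "card S1 = card (scomp F k)" using S1 i1 by (simp add: card_image)
  also have "card S2 = card (scomp (insert x F) k)" using S2 i2 by (simp add: card_image)
  finally show ?thesis by simp
qed

definition gf :: "nat set \<Rightarrow> int fps" where
  "gf F = Abs_fps (\<lambda>k. int (card (scomp F k)))"

lemma gf_main:
  assumes "finite F" shows "gf F * (1 - fps_X) ^ card F = fps_X ^ card F"
  using assms
proof (induction F rule: finite_induct)
  case empty
  have "gf {} = 1" by (rule fps_ext) (auto simp: gf_def scomp_empty)
  then show ?case by simp
next
  case (insert x F)
  have "gf (insert x F) * (1 - fps_X) = gf F * fps_X"
  proof (rule fps_ext)
    fix n show "(gf (insert x F) * (1 - fps_X)) $ n = (gf F * fps_X) $ n"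
    proof (cases n)
      case 0 then show ?thesis using insert by (simp add: gf_def scomp_insert_0 algebra_simps)
    next
      case (Suc k) then show ?thesis using insert scomp_insert_Suc[OF insert(1,2), of k]
        by (simp add: gf_def algebra_simps)
    qed
  qed
  have "gf (insert x F) * (1 - fps_X) ^ card (insert x F) = (gf (insert x F) * (1 - fps_X)) * (1 - fps_X) ^ card F"
    using insert by (simp add: algebra_simps)
  also have "\<dots> = (gf F * (1 - fps_X) ^ card F) * fps_X" unfolding \<open>gf (insert x F) * (1 - fps_X) = gf F * fps_X\<close>
    by (simp add: algebra_simps)
  finally show ?case using insert by simp
qed

lemma ind_finite: "finite {A. independent N E A}"
  by (rule finite_subset[of _ "Pow {0..<N}"]) (auto simp: independent_def)

lemma ind_card_le: "independent N E A \<Longrightarrow> card A \<le> indep_num N E"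
  unfolding indep_num_def by (rule Max_ge) (auto intro: finite_imageI ind_finite)

lemma std_decomp: "std_monomials N E k = (\<Union>F\<in>{A. independent N E A}. scomp F k)"
proof (intro equalityI subsetI)
  fix a assume a: "a \<in> std_monomials N E k"
  have z: "\<forall>i. N \<le> i \<longrightarrow> a i = 0" and s: "(\<Sum>i<N. a i) = k" and e: "\<forall>i<N. \<forall>j<N. E i j \<longrightarrow> a i = 0 \<or> a j = 0"
  proof -
    have all: "(\<forall>i. N \<le> i \<longrightarrow> a i = 0) \<and> (\<Sum>i<N. a i) = k \<and> (\<forall>i<N. \<forall>j<N. E i j \<longrightarrow> a i = 0 \<or> a j = 0)"
      using a unfolding std_monomials_def mem_Collect_eq .
    then show "\<forall>i. N \<le> i \<longrightarrow> a i = 0" "(\<Sum>i<N. a i) = k" "\<forall>i<N. \<forall>j<N. E i j \<longrightarrow> a i = 0 \<or> a j = 0"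
      by (rule conjunct1, rule conjunct1[OF conjunct2], rule conjunct2[OF conjunct2])
  qed
  define F where "F = {i. a i \<noteq> 0}"
  have Fs: "F \<subseteq> {0..<N}"
  proof
    fix i assume "i \<in> F" then have "a i \<noteq> 0" by (simp add: F_def)
    then have "\<not> N \<le> i" using z by auto
    then show "i \<in> {0..<N}" by simp
  qed
  have "\<forall>i\<in>F. \<forall>j\<in>F. \<not> E i j"
  proof (intro ballI notI)
    fix i j assume ij: "i \<in> F" "j \<in> F" and "E i j"
    moreover have "i < N" "j < N" using Fs ij by auto
    ultimately have "a i = 0 \<or> a j = 0" using e by simp
    then show False using ij by (simp add: F_def)
  qed
  then have indF: "independent N E F" unfolding independent_def using Fs by simp
  have "sum a F = sum a {..<N}"
    by (rule sum.mono_neutral_left) (use Fs in \<open>auto simp: F_def\<close>)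
  then have "sum a F = k" using s by simp
  then have "a \<in> scomp F k" unfolding scomp_def F_def by simp
  then show "a \<in> (\<Union>F\<in>{A. independent N E A}. scomp F k)" using indF by auto
next
  fix a assume "a \<in> (\<Union>F\<in>{A. independent N E A}. scomp F k)"
  then obtain F where F: "independent N E F" and ac: "a \<in> scomp F k" by auto
  have sup: "{i. a i \<noteq> 0} = F" and s: "sum a F = k" using ac unfolding scomp_def by simp_all
  have Fs: "F \<subseteq> {..<N}" and ind: "\<forall>i\<in>F. \<forall>j\<in>F. \<not> E i j" using F unfolding independent_def by auto
  have sup': "a i \<noteq> 0 \<longleftrightarrow> i \<in> F" for i using sup by auto
  have z: "\<forall>i. N \<le> i \<longrightarrow> a i = 0" using Fs sup' by (meson lessThan_iff not_le subsetD)
  have "sum a F = sum a {..<N}"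
    by (rule sum.mono_neutral_left) (use Fs sup' in auto)
  then have "(\<Sum>i<N. a i) = k" using s by simp
  moreover have "\<forall>i<N. \<forall>j<N. E i j \<longrightarrow> a i = 0 \<or> a j = 0" using ind sup' by metis
  ultimately show "a \<in> std_monomials N E k" using z unfolding std_monomials_def by simp
qed
lemma hs_decomp: "hilbert_series N E = (\<Sum>F\<in>{A. independent N E A}. gf F)"
proof (rule fps_ext)
  fix k
  have fin: "finite F" if "F \<in> {A. independent N E A}" for F
    using that by (auto simp: independent_def intro: finite_subset)
  have "card (std_monomials N E k) = (\<Sum>F\<in>{A. independent N E A}. card (scomp F k))"
    unfolding std_decomp
  proof (rule card_UN_disjoint)
    show "finite {A. independent N E A}" by (rule ind_finite)
    show "\<forall>F\<in>{A. independent N E A}. finite (scomp F k)" using fin scomp_finite by blast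
    show "\<forall>F\<in>{A. independent N E A}. \<forall>G\<in>{A. independent N E A}. F \<noteq> G \<longrightarrow> scomp F k \<inter> scomp G k = {}"
      unfolding scomp_def by auto
  qed
  then show "hilbert_series N E $ k = (\<Sum>F\<in>{A. independent N E A}. gf F) $ k"
    by (simp add: hilbert_series_def hilbert_fun_def fps_sum_nth gf_def)
qed

lemma fps_lin: "fps_of_poly [:1, -1::int:] = 1 - fps_X"
  by (simp add: fps_of_poly_linear' fps_const_neg)

definition hpol :: "nat \<Rightarrow> (nat \<Rightarrow> nat \<Rightarrow> bool) \<Rightarrow> int poly" where
  "hpol N E = (\<Sum>F\<in>{A. independent N E A}. [:0,1:] ^ card F * [:1,-1:] ^ (indep_num N E - card F))"

lemma hpol_is: "is_h_poly N E (hpol N E)"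
proof -
  let ?I = "{A. independent N E A}" and ?a = "indep_num N E"
  have fin: "finite F" if "F \<in> ?I" for F
    using that by (auto simp: independent_def intro: finite_subset)
  have "hilbert_series N E * (1 - fps_X) ^ ?a = (\<Sum>F\<in>?I. gf F * (1 - fps_X) ^ ?a)"
    by (simp add: hs_decomp sum_distrib_right)
  also have "\<dots> = (\<Sum>F\<in>?I. fps_X ^ card F * (1 - fps_X) ^ (?a - card F))"
  proof (rule sum.cong)
    fix F assume F: "F \<in> ?I"
    have "(1 - fps_X :: int fps) ^ ?a = (1 - fps_X) ^ card F * (1 - fps_X) ^ (?a - card F)"
      using ind_card_le[of N E F] F by (simp flip: power_add)
    then show "gf F * (1 - fps_X) ^ ?a = fps_X ^ card F * (1 - fps_X) ^ (?a - card F)"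
      using gf_main[OF fin[OF F]] by (metis mult.assoc)
  qed simp
  also have "\<dots> = fps_of_poly (hpol N E)"
    by (simp add: hpol_def fps_of_poly_sum fps_of_poly_power fps_of_poly_mult fps_of_poly_fps_X fps_lin)
  finally show ?thesis unfolding is_h_poly_def by simp
qed

lemma hpol_degree: "degree (hpol N E) \<le> indep_num N E"
  unfolding hpol_def
proof (rule degree_sum_le)
  fix F assume F: "F \<in> {A. independent N E A}"
  have "degree ([:0,1::int:] ^ card F * [:1,-1:] ^ (indep_num N E - card F))
     \<le> degree ([:0,1::int:] ^ card F) + degree ([:1,-1::int:] ^ (indep_num N E - card F))"
    by (rule degree_mult_le)
  also have "\<dots> \<le> card F + (indep_num N E - card F)"
    by (intro add_mono order.trans[OF degree_power_le]) auto
  also have "\<dots> = indep_num N E" using ind_card_le[of N E F] F by simp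
  finally show "degree ([:0,1::int:] ^ card F * [:1,-1:] ^ (indep_num N E - card F)) \<le> indep_num N E" .
qed (simp add: ind_finite)

lemma xpow_mult_coeff: "m \<le> k \<Longrightarrow> coeff ([:0,1::int:] ^ m * q) k = coeff q (k - m)"
proof -
  assume "m \<le> k"
  have "[:0,1::int:] ^ m = monom 1 m" by (simp add: monom_altdef)
  then show ?thesis using \<open>m \<le> k\<close> by (simp add: coeff_monom_mult)
qed
lemma hpol_coeff: "coeff (hpol N E) (indep_num N E) = (\<Sum>F\<in>{A. independent N E A}. (-1) ^ (indep_num N E - card F))"
  unfolding hpol_def coeff_sum
proof (rule sum.cong)
  fix F assume F: "F \<in> {A. independent N E A}"
  let ?m = "card F" and ?a = "indep_num N E"
  have le: "?m \<le> ?a" using ind_card_le[of N E F] F by simp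
  have x: "[:0,1::int:] ^ ?m = monom 1 ?m" by (simp add: monom_altdef)
  have "coeff ([:1,-1::int:] ^ (?a - ?m)) (?a - ?m) = (-1) ^ (?a - ?m)"
  proof -
    have "degree ([:1,-1::int:] ^ (?a - ?m)) = ?a - ?m" by (simp add: degree_power_eq)
    moreover have "lead_coeff ([:1,-1::int:] ^ (?a - ?m)) = (-1) ^ (?a - ?m)"
      by (simp add: lead_coeff_power)
    ultimately show ?thesis by simp
  qed
  then show "coeff ([:0,1::int:] ^ ?m * [:1,-1:] ^ (?a - ?m)) ?a = (-1) ^ (?a - ?m)"
    using le by (simp add: xpow_mult_coeff)
qed simp

lemma pg_iff: "pseudo_gorenstein_star N E \<longleftrightarrow>
   (\<Sum>F\<in>{A. independent N E A}. (-1::int) ^ (indep_num N E - card F)) = 1"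
proof
  assume "pseudo_gorenstein_star N E"
  then obtain h where h: "is_h_poly N E h" and l: "lead_coeff h = 1" and d: "int (degree h) - int (indep_num N E) = 0"
    unfolding pseudo_gorenstein_star_def by blast
  have "fps_of_poly h = fps_of_poly (hpol N E)" using h hpol_is[of N E] unfolding is_h_poly_def by simp
  then have "h = hpol N E" by (simp only: fps_of_poly_eq_iff)
  then show "(\<Sum>F\<in>{A. independent N E A}. (-1::int) ^ (indep_num N E - card F)) = 1"
    using l d hpol_coeff[of N E] by simp
next
  assume s: "(\<Sum>F\<in>{A. independent N E A}. (-1::int) ^ (indep_num N E - card F)) = 1"
  then have c: "coeff (hpol N E) (indep_num N E) = 1" by (simp add: hpol_coeff)
  then have "degree (hpol N E) \<ge> indep_num N E" by (simp add: le_degree)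
  then have "degree (hpol N E) = indep_num N E" using hpol_degree[of N E] by simp
  then show "pseudo_gorenstein_star N E" unfolding pseudo_gorenstein_star_def
    using hpol_is c by force
qed

definition pind :: "nat \<Rightarrow> nat \<Rightarrow> nat set \<Rightarrow> bool" where
  "pind a b F \<longleftrightarrow> F \<subseteq> {a..<b} \<and> (\<forall>i\<in>F. Suc i \<notin> F)"

definition ps :: "nat \<Rightarrow> nat \<Rightarrow> int" where
  "ps a b = (\<Sum>F\<in>{F. pind a b F}. (-1) ^ card F)"

lemma pind_finite: "finite {F. pind a b F}"
  by (rule finite_subset[of _ "Pow {a..<b}"]) (auto simp: pind_def)

lemma pind_fin: "pind a b F \<Longrightarrow> finite F"
  unfolding pind_def by (meson finite_atLeastLessThan finite_subset)

lemma ps_base0: "ps a a = 1"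
proof -
  have "{F. pind a a F} = {{}}" by (auto simp: pind_def)
  then show ?thesis by (simp add: ps_def)
qed

lemma ps_base1: "ps a (Suc a) = 0"
proof -
  have "{F. pind a (Suc a) F} = {{}, {a}}" by (auto simp: pind_def)
  then show ?thesis by (simp add: ps_def)
qed

lemma pind_split:
  assumes "a \<le> b"
  shows "{F. pind a (Suc (Suc b)) F} = {F. pind a (Suc b) F} \<union> insert (Suc b) ` {F. pind a b F}"
proof (intro equalityI subsetI)
  fix F assume "F \<in> {F. pind a (Suc (Suc b)) F}"
  then have F: "F \<subseteq> {a..<Suc (Suc b)}" and nc: "\<forall>i\<in>F. Suc i \<notin> F" by (auto simp: pind_def)
  show "F \<in> {F. pind a (Suc b) F} \<union> insert (Suc b) ` {F. pind a b F}"
  proof (cases "Suc b \<in> F")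
    case False
    then have "F \<subseteq> {a..<Suc b}" using F by (auto simp: less_Suc_eq)
    then show ?thesis using nc by (auto simp: pind_def)
  next
    case True
    then have "b \<notin> F" using nc by auto
    then have "F - {Suc b} \<subseteq> {a..<b}" using F by (auto simp: less_Suc_eq)
    then have "pind a b (F - {Suc b})" using nc by (auto simp: pind_def)
    moreover have "F = insert (Suc b) (F - {Suc b})" using True by auto
    ultimately show ?thesis by blast
  qed
next
  fix F assume "F \<in> {F. pind a (Suc b) F} \<union> insert (Suc b) ` {F. pind a b F}"
  then show "F \<in> {F. pind a (Suc (Suc b)) F}"
  proof
    assume "F \<in> {F. pind a (Suc b) F}" then show ?thesis by (auto simp: pind_def)
  next
    assume "F \<in> insert (Suc b) ` {F. pind a b F}"
    then obtain G where G: "pind a b G" and FG: "F = insert (Suc b) G" by auto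
    have "G \<subseteq> {a..<b}" and nc: "\<forall>i\<in>G. Suc i \<notin> G" using G by (auto simp: pind_def)
    then show ?thesis unfolding FG pind_def using assms by auto
  qed
qed

lemma ps_rec:
  assumes "a \<le> b"
  shows "ps a (Suc (Suc b)) = ps a (Suc b) - ps a b"
proof -
  have disj: "{F. pind a (Suc b) F} \<inter> insert (Suc b) ` {F. pind a b F} = {}"
    by (auto simp: pind_def)
  have inj: "inj_on (insert (Suc b)) {F. pind a b F}"
  proof (rule inj_onI)
    fix F G assume "F \<in> {F. pind a b F}" "G \<in> {F. pind a b F}" "insert (Suc b) F = insert (Suc b) G"
    moreover have "Suc b \<notin> F" "Suc b \<notin> G" using calculation by (auto simp: pind_def)
    ultimately show "F = G" by (metis insert_ident)
  qed
  have "ps a (Suc (Suc b)) = (\<Sum>F\<in>{F. pind a (Suc b) F}. (-1) ^ card F) + (\<Sum>F\<in>insert (Suc b) ` {F. pind a b F}. (-1) ^ card F)"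
    unfolding ps_def pind_split[OF assms]
    by (rule sum.union_disjoint) (auto simp: pind_finite disj)
  also have "(\<Sum>F\<in>insert (Suc b) ` {F. pind a b F}. (-1::int) ^ card F) = (\<Sum>F\<in>{F. pind a b F}. (-1) ^ card (insert (Suc b) F))"
    using inj by (simp add: sum.reindex)
  also have "\<dots> = (\<Sum>F\<in>{F. pind a b F}. - ((-1) ^ card F))"
  proof (rule sum.cong)
    fix F assume F: "F \<in> {F. pind a b F}"
    then have "Suc b \<notin> F" "finite F" by (auto simp: pind_def pind_fin)
    then show "(-1::int) ^ card (insert (Suc b) F) = - ((-1) ^ card F)" by simp
  qed simp
  finally show ?thesis by (simp add: ps_def sum_negf)
qed

fun fv :: "nat \<Rightarrow> int" where
  "fv 0 = 1" | "fv (Suc 0) = 0" | "fv (Suc (Suc m)) = fv (Suc m) - fv m"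

lemma ps_fv: "ps a (a + m) = fv m"
proof (induction m rule: fv.induct)
  case 1 then show ?case by (simp add: ps_base0)
next
  case 2 then show ?case by (simp add: ps_base1)
next
  case (3 m)
  have "ps a (a + Suc (Suc m)) = ps a (Suc (Suc (a + m)))" by simp
  also have "\<dots> = ps a (Suc (a + m)) - ps a (a + m)" by (rule ps_rec) simp
  finally show ?case using 3 by simp
qed

lemma fv3: "fv (m + 3) = - fv m"
proof -
  have "fv (m + 3) = fv (Suc (Suc (Suc m)))" by (simp add: numeral_3_eq_3)
  then show ?thesis by simp
qed

lemma fv6: "fv (m + 6) = fv m"
  using fv3[of "m + 3"] fv3[of m] by (simp add: add.assoc)

lemma suc_mod: "i < n \<Longrightarrow> Suc i mod n = (if Suc i = n then 0 else Suc i)"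
  by auto

lemma cyc_ind_iff:
  assumes n: "n \<ge> 3"
  shows "independent n (cycle_edge n) F \<longleftrightarrow>
     F \<subseteq> {0..<n} \<and> (\<forall>i\<in>F. Suc i \<notin> F) \<and> \<not> (0 \<in> F \<and> n - 1 \<in> F)"
proof
  assume "independent n (cycle_edge n) F"
  then have F: "F \<subseteq> {0..<n}" and nc: "\<forall>i\<in>F. \<forall>j\<in>F. \<not> cycle_edge n i j"
    unfolding independent_def by auto
  have "\<forall>i\<in>F. Suc i \<notin> F"
  proof (intro ballI notI)
    fix i assume i: "i \<in> F" "Suc i \<in> F"
    then have "Suc i < n" using F by auto
    then have "cycle_edge n i (Suc i)" unfolding cycle_edge_def by simp
    then show False using nc i by blast
  qed
  moreover have "\<not> (0 \<in> F \<and> n - 1 \<in> F)"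
  proof
    assume a: "0 \<in> F \<and> n - 1 \<in> F"
    have "cycle_edge n (n - 1) 0" unfolding cycle_edge_def using n by simp
    then show False using nc a by blast
  qed
  ultimately show "F \<subseteq> {0..<n} \<and> (\<forall>i\<in>F. Suc i \<notin> F) \<and> \<not> (0 \<in> F \<and> n - 1 \<in> F)" using F by blast
next
  assume a: "F \<subseteq> {0..<n} \<and> (\<forall>i\<in>F. Suc i \<notin> F) \<and> \<not> (0 \<in> F \<and> n - 1 \<in> F)"
  then have F: "F \<subseteq> {0..<n}" and nc: "\<forall>i\<in>F. Suc i \<notin> F" and e: "\<not> (0 \<in> F \<and> n - 1 \<in> F)" by auto
  have "\<not> cycle_edge n i j" if i: "i \<in> F" and j: "j \<in> F" for i j
  proof
    assume c: "cycle_edge n i j"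
    have "i < n" "j < n" using F i j by auto
    then consider "j = Suc i mod n" | "i = Suc j mod n" using c unfolding cycle_edge_def by blast
    then show False
    proof cases
      case 1
      then show False using suc_mod[OF \<open>i < n\<close>] nc e i j by (auto split: if_splits)
    next
      case 2
      then show False using suc_mod[OF \<open>j < n\<close>] nc e i j by (auto split: if_splits)
    qed
  qed
  then show "independent n (cycle_edge n) F" unfolding independent_def using F by auto
qed

lemma cyc_split:
  assumes n: "n \<ge> 3"
  shows "{F. independent n (cycle_edge n) F} = {F. pind 0 (n - 1) F} \<union> insert (n - 1) ` {F. pind 1 (n - 2) F}"
proof (intro equalityI subsetI)
  fix F assume "F \<in> {F. independent n (cycle_edge n) F}"
  then have F: "F \<subseteq> {0..<n}" and nc: "\<forall>i\<in>F. Suc i \<notin> F" and e: "\<not> (0 \<in> F \<and> n - 1 \<in> F)"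
    using cyc_ind_iff[OF n] by auto
  show "F \<in> {F. pind 0 (n - 1) F} \<union> insert (n - 1) ` {F. pind 1 (n - 2) F}"
  proof (cases "n - 1 \<in> F")
    case False
    have "F \<subseteq> {0..<n-1}"
    proof
      fix i assume i: "i \<in> F"
      then have "i < n" "i \<noteq> n - 1" using F False by auto
      then show "i \<in> {0..<n-1}" by simp
    qed
    then show ?thesis using nc by (auto simp: pind_def)
  next
    case True
    then have "0 \<notin> F" using e by auto
    moreover have "n - 2 \<notin> F"
    proof
      assume "n - 2 \<in> F"
      moreover have "Suc (n - 2) = n - 1" using n by simp
      ultimately show False using True nc by metis
    qed
    ultimately have "F - {n - 1} \<subseteq> {1..<n-2}"
    proof -
      assume a: "0 \<notin> F" "n - 2 \<notin> F"
      show ?thesis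
      proof
        fix i assume i: "i \<in> F - {n - 1}"
        then have "i < n" "i \<noteq> n - 1" "i \<noteq> n - 2" using F a by auto
        moreover have "i \<noteq> 0" using i a by (metis DiffD1)
        ultimately show "i \<in> {1..<n-2}" by simp
      qed
    qed
    then have "pind 1 (n - 2) (F - {n - 1})" using nc by (auto simp: pind_def)
    moreover have "F = insert (n - 1) (F - {n - 1})" using True by auto
    ultimately show ?thesis by blast
  qed
next
  fix F assume "F \<in> {F. pind 0 (n - 1) F} \<union> insert (n - 1) ` {F. pind 1 (n - 2) F}"
  then show "F \<in> {F. independent n (cycle_edge n) F}"
  proof
    assume "F \<in> {F. pind 0 (n - 1) F}"
    then have "F \<subseteq> {0..<n-1}" "\<forall>i\<in>F. Suc i \<notin> F" by (auto simp: pind_def)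
    then show ?thesis using cyc_ind_iff[OF n] by auto
  next
    assume "F \<in> insert (n - 1) ` {F. pind 1 (n - 2) F}"
    then obtain G where G: "pind 1 (n - 2) G" and FG: "F = insert (n - 1) G" by auto
    have Gs: "G \<subseteq> {1..<n-2}" and nc: "\<forall>i\<in>G. Suc i \<notin> G" using G by (auto simp: pind_def)
    have "F \<subseteq> {0..<n}"
    proof
      fix i assume "i \<in> F"
      then consider "i = n - 1" | "i \<in> G" using FG by auto
      then show "i \<in> {0..<n}"
      proof cases
        case 2 then have "i < n - 2" using Gs by auto
        then show ?thesis by simp
      qed (use n in simp)
    qed
    moreover have "\<forall>i\<in>F. Suc i \<notin> F"
    proof
      fix i assume "i \<in> F"
      then consider "i = n - 1" | "i \<in> G" using FG by auto
      then show "Suc i \<notin> F"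
      proof cases
        case 1 then show ?thesis using Gs n FG by auto
      next
        case 2
        then have "i < n - 2" using Gs by auto
        then have "Suc i \<noteq> n - 1" using n by linarith
        then show ?thesis using nc 2 FG by auto
      qed
    qed
    moreover have "0 \<notin> F" using Gs n FG by auto
    ultimately show ?thesis using cyc_ind_iff[OF n] by auto
  qed
qed

lemma cyc_signed_sum:
  assumes n: "n \<ge> 3"
  shows "(\<Sum>F\<in>{F. independent n (cycle_edge n) F}. (-1::int) ^ card F) = fv (n - 1) - fv (n - 3)"
proof -
  have disj: "{F. pind 0 (n - 1) F} \<inter> insert (n - 1) ` {F. pind 1 (n - 2) F} = {}"
  proof -
    have "\<not> pind 0 (n - 1) (insert (n - 1) G)" for G unfolding pind_def by auto
    then show ?thesis by blast
  qed
  have inj: "inj_on (insert (n - 1)) {F. pind 1 (n - 2) F}"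
  proof (rule inj_onI)
    fix F G assume "F \<in> {F. pind 1 (n - 2) F}" "G \<in> {F. pind 1 (n - 2) F}" "insert (n - 1) F = insert (n - 1) G"
    moreover have "n - 1 \<notin> {1..<n-2}" by auto
    then have "n - 1 \<notin> F" "n - 1 \<notin> G" using calculation unfolding pind_def mem_Collect_eq by (meson subsetD)+
    ultimately show "F = G" by (metis insert_ident)
  qed
  have "(\<Sum>F\<in>{F. independent n (cycle_edge n) F}. (-1::int) ^ card F)
      = (\<Sum>F\<in>{F. pind 0 (n - 1) F}. (-1) ^ card F) + (\<Sum>F\<in>insert (n - 1) ` {F. pind 1 (n - 2) F}. (-1) ^ card F)"
    unfolding cyc_split[OF n]
    by (rule sum.union_disjoint[OF pind_finite finite_imageI[OF pind_finite] disj])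
  also have "(\<Sum>F\<in>insert (n - 1) ` {F. pind 1 (n - 2) F}. (-1::int) ^ card F) = (\<Sum>F\<in>{F. pind 1 (n - 2) F}. (-1) ^ card (insert (n - 1) F))"
    using inj by (simp add: sum.reindex)
  also have "\<dots> = (\<Sum>F\<in>{F. pind 1 (n - 2) F}. - ((-1) ^ card F))"
  proof (rule sum.cong)
    fix F assume F: "F \<in> {F. pind 1 (n - 2) F}"
    moreover have "n - 1 \<notin> {1..<n-2}" by auto
    ultimately have "n - 1 \<notin> F" "finite F" unfolding pind_def mem_Collect_eq by (meson subsetD, meson finite_atLeastLessThan finite_subset)
    then show "(-1::int) ^ card (insert (n - 1) F) = - ((-1) ^ card F)" by simp
  qed simp
  also have "(\<Sum>F\<in>{F. pind 0 (n - 1) F}. (-1::int) ^ card F) = fv (n - 1)"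
    using ps_fv[of 0 "n - 1"] by (simp add: ps_def)
  also have "(\<Sum>F\<in>{F. pind 1 (n - 2) F}. - ((-1::int) ^ card F)) = - fv (n - 3)"
  proof -
    have "ps 1 (1 + (n - 3)) = fv (n - 3)" by (rule ps_fv)
    moreover have "1 + (n - 3) = n - 2" using n by simp
    ultimately show ?thesis by (simp add: ps_def sum_negf)
  qed
  finally show ?thesis by simp
qed

lemma cyc_alpha:
  assumes n: "n \<ge> 3"
  shows "indep_num n (cycle_edge n) = n div 2"
proof -
  let ?I = "{A. independent n (cycle_edge n) A}"
  have up: "card F \<le> n div 2" if F: "independent n (cycle_edge n) F" for F
  proof -
    define s where "s i = Suc i mod n" for i
    have Fs: "F \<subseteq> {0..<n}" and nc: "\<forall>i\<in>F. \<forall>j\<in>F. \<not> cycle_edge n i j"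
      using F unfolding independent_def by auto
    have inj: "inj_on s {0..<n}"
    proof (rule inj_onI)
      fix i j assume "i \<in> {0..<n}" "j \<in> {0..<n}" "s i = s j"
      then show "i = j" unfolding s_def using suc_mod by (auto split: if_splits)
    qed
    have disj: "F \<inter> s ` F = {}"
    proof (rule ccontr)
      assume "F \<inter> s ` F \<noteq> {}"
      then obtain i where i: "i \<in> F" "s i \<in> F" by auto
      then have "cycle_edge n i (s i)" using Fs unfolding cycle_edge_def s_def by auto
      then show False using nc i by blast
    qed
    have sub: "F \<union> s ` F \<subseteq> {0..<n}" using Fs n unfolding s_def by auto
    have finF: "finite F" using Fs finite_subset by blast
    have "card (s ` F) = card F" using inj Fs by (meson card_image inj_on_subset)
    moreover have "card (F \<union> s ` F) = card F + card (s ` F)"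
      using disj finF by (simp add: card_Un_disjoint)
    moreover have "card (F \<union> s ` F) \<le> n" using sub by (metis card_atLeastLessThan card_mono finite_atLeastLessThan minus_nat.diff_0)
    ultimately show ?thesis by linarith
  qed
  define W where "W = (\<lambda>i. 2 * i) ` {..<n div 2}"
  have Wc: "card W = n div 2" unfolding W_def by (simp add: card_image inj_on_def)
  have Wi: "independent n (cycle_edge n) W"
    unfolding cyc_ind_iff[OF n]
  proof (intro conjI)
    show "W \<subseteq> {0..<n}" unfolding W_def by auto
    show "\<forall>i\<in>W. Suc i \<notin> W" unfolding W_def by auto presburger
    show "\<not> (0 \<in> W \<and> n - 1 \<in> W)" unfolding W_def using n by auto
  qed
  have fin: "finite (card ` ?I)" using ind_finite by blast
  have "Max (card ` ?I) = n div 2"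
  proof (rule Max_eqI)
    show "finite (card ` ?I)" by (rule fin)
    show "y \<le> n div 2" if "y \<in> card ` ?I" for y using that up by auto
    have "card W \<in> card ` ?I" using Wi by blast
    then show "n div 2 \<in> card ` ?I" using Wc by simp
  qed
  then show ?thesis unfolding indep_num_def .
qed

lemma fv_small: "fv 0 = 1" "fv 1 = 0" "fv 2 = -1" "fv 3 = -1" "fv 4 = 0" "fv 5 = 1"
proof -
  have e: "(1::nat) = Suc 0" "(2::nat) = Suc (Suc 0)" "(3::nat) = Suc (Suc (Suc 0))"
    "(4::nat) = Suc (Suc (Suc (Suc 0)))" "(5::nat) = Suc (Suc (Suc (Suc (Suc 0))))" by simp_all
  show "fv 0 = 1" "fv 1 = 0" "fv 2 = -1" "fv 3 = -1" "fv 4 = 0" "fv 5 = 1"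
    unfolding e by simp_all
qed

lemma fv_mod: "fv m = fv (m mod 6)"
proof (induction m rule: less_induct)
  case (less m)
  show ?case
  proof (cases "m < 6")
    case True then show ?thesis by simp
  next
    case False
    then have "(m - 6) + 6 = m" by simp
    then have "fv m = fv (m - 6)" using fv6[of "m - 6"] by metis
    also have "\<dots> = fv ((m - 6) mod 6)" using less.IH[of "m - 6"] False by linarith
    also have "(m - 6) mod 6 = m mod 6" using mod_add_self2[of "m - 6" 6] \<open>(m - 6) + 6 = m\<close> by simp
    finally show ?thesis .
  qed
qed

definition gv :: "nat \<Rightarrow> int" where
  "gv n = (-1) ^ (n div 2) * (fv (n - 1) - fv (n - 3))"

lemma gv_per: "m \<ge> 3 \<Longrightarrow> gv (m + 12) = gv m"
proof -
  assume m: "m \<ge> 3"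
  have a: "(m + 12) div 2 = m div 2 + 6" by simp
  have b: "m + 12 - 1 = (m - 1) + 6 + 6" "m + 12 - 3 = (m - 3) + 6 + 6" using m by simp_all
  show ?thesis unfolding gv_def a b fv6 by (simp add: power_add)
qed

lemma gv_char: "n \<ge> 3 \<Longrightarrow> gv n = 1 \<longleftrightarrow> n mod 12 \<in> {1, 2, 5, 10}"
proof (induction n rule: less_induct)
  case (less n)
  show ?case
  proof (cases "n < 15")
    case True
    then have "n = 3 \<or> n = 4 \<or> n = 5 \<or> n = 6 \<or> n = 7 \<or> n = 8 \<or> n = 9 \<or> n = 10 \<or> n = 11 \<or> n = 12 \<or> n = 13 \<or> n = 14"
      using less.prems by presburger
    then show ?thesis
      by (elim disjE) (simp_all add: gv_def fv_small fv_mod[of 6] fv_mod[of 7] fv_mod[of 8] fv_mod[of 9] fv_mod[of 10] fv_mod[of 11] fv_mod[of 12] fv_mod[of 13])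
  next
    case False
    then have "gv n = gv (n - 12)" using gv_per[of "n - 12"] by simp
    moreover have "(n - 12) mod 12 = n mod 12"
    proof -
      have "(n - 12) + 12 = n" using False by simp
      then show ?thesis using mod_add_self2[of "n - 12" 12] by simp
    qed
    moreover have "gv (n - 12) = 1 \<longleftrightarrow> (n - 12) mod 12 \<in> {1, 2, 5, 10}" using less.IH[of "n - 12"] False by simp
    ultimately show ?thesis by simp
  qed
qed

lemma sign_shift: "c \<le> a \<Longrightarrow> (-1::int) ^ (a - c) = (-1) ^ a * (-1) ^ c"
proof -
  assume "c \<le> a"
  then have "(-1::int) ^ a = (-1) ^ (a - c) * (-1) ^ c" by (simp flip: power_add)
  then have "(-1::int) ^ a * (-1) ^ c = (-1) ^ (a - c) * ((-1) ^ c * (-1) ^ c)" by simp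
  also have "(-1::int) ^ c * (-1) ^ c = 1" by (simp flip: power_add)
  finally show ?thesis by simp
qed

theorem theorem2p3:
  fixes n :: nat
  assumes "n \<ge> 3"
  shows "pseudo_gorenstein_star n (cycle_edge n) \<longleftrightarrow> n mod 12 \<in> {1, 2, 5, 10}"
proof -
  let ?I = "{A. independent n (cycle_edge n) A}"
  have "(\<Sum>F\<in>?I. (-1::int) ^ (indep_num n (cycle_edge n) - card F))
      = (\<Sum>F\<in>?I. (-1) ^ (n div 2) * (-1) ^ card F)"
  proof (rule sum.cong)
    fix F assume "F \<in> ?I"
    then have "card F \<le> indep_num n (cycle_edge n)" by (simp add: ind_card_le)
    then show "(-1::int) ^ (indep_num n (cycle_edge n) - card F) = (-1) ^ (n div 2) * (-1) ^ card F"
      using cyc_alpha[OF assms] by (simp add: sign_shift)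
  qed simp
  also have "\<dots> = gv n" unfolding gv_def
    by (simp add: sum_distrib_left[symmetric] cyc_signed_sum[OF assms])
  finally show ?thesis unfolding pg_iff using gv_char[OF assms] by simp
qed

end
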